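(* Let $s$ and $K$ be probability densities with respect to Lebesgue measure on $\mathbb{R}$, and for $w>0$ set $K_w(y)=w^{-1}K(w^{-1}y)$. Let $g=\sqrt{s}$ and assume that $\omega_2(g,\eta)\le\phi(\eta)$ for all $\eta\ge0$, where $\omega_2(g,\eta)=\sup_{|z|\le\eta}\|g(\cdot+z)-g\|$ and $\phi$ is a nondecreasing concave function on $[0,\infty)$ with $\phi(0)=0$. Then for every $w>0$, \[ \left\|\sqrt{s}-\sqrt{K_w\ast s}\right\|^2\le2\left[\int_{\mathbb{R}}(1\vee x^2)K(x)\,dx\right]\phi^2(w). \]
   Context: $\|\cdot\|$ is the $\mathbb{L}_2$-norm with respect to Lebesgue measure, and $\ast$ denotes convolution. *)

theory Defs
  imports "HOL-Analysis.Analysis"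
begin

definition prob_density :: "(real \<Rightarrow> real) \<Rightarrow> bool" where
  "prob_density f \<longleftrightarrow> f \<in> borel_measurable lborel \<and> (\<forall>x. 0 \<le> f x)
      \<and> (\<integral>\<^sup>+ x. ennreal (f x) \<partial>lborel) = 1"

definition scaled_kernel :: "(real \<Rightarrow> real) \<Rightarrow> real \<Rightarrow> real \<Rightarrow> real" where
  "scaled_kernel K w y = K (y / w) / w"

definition convolution :: "(real \<Rightarrow> real) \<Rightarrow> (real \<Rightarrow> real) \<Rightarrow> real \<Rightarrow> real" where
  "convolution f g x = (\<integral> y. f (x - y) * g y \<partial>lborel)"

definition L2_norm :: "(real \<Rightarrow> real) \<Rightarrow> real" where
  "L2_norm f = sqrt (\<integral> x. (f x)\<^sup>2 \<partial>lborel)"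

definition omega2 :: "(real \<Rightarrow> real) \<Rightarrow> real \<Rightarrow> real" where
  "omega2 g \<eta> = (SUP z \<in> {z. \<bar>z\<bar> \<le> \<eta>}. L2_norm (\<lambda>x. g (x + z) - g x))"

end

theory Submission
  imports Defs
begin

lemma ptwise:
  fixes f s :: "real \<Rightarrow> real" and a :: real
  assumes fm[measurable]: "f \<in> borel_measurable lborel" and sm[measurable]: "s \<in> borel_measurable lborel"
    and f0: "\<And>y. 0 \<le> f y" and s0: "\<And>y. 0 \<le> s y" and a0: "0 \<le> a"
    and f1: "(\<integral>\<^sup>+ y. ennreal (f y) \<partial>lborel) = 1"
  shows "ennreal ((a - sqrt (\<integral> y. f y * s y \<partial>lborel))\<^sup>2)
     \<le> (\<integral>\<^sup>+ y. ennreal (f y * (a - sqrt (s y))\<^sup>2) \<partial>lborel)"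
proof (cases "(\<integral>\<^sup>+ y. ennreal (f y * s y) \<partial>lborel) = \<infinity>")
  case True
  have "(\<integral>\<^sup>+ y. ennreal (f y * s y) \<partial>lborel)
     \<le> (\<integral>\<^sup>+ y. 2 * ennreal (f y * (a - sqrt (s y))\<^sup>2) + ennreal (2 * a\<^sup>2) * ennreal (f y) \<partial>lborel)"
  proof (rule nn_integral_mono)
    fix y
    have "f y * s y \<le> 2 * (f y * (a - sqrt (s y))\<^sup>2) + (2 * a\<^sup>2) * f y"
    proof -
      have "(sqrt (s y))\<^sup>2 = s y" using s0 by simp
      moreover have "(sqrt (s y))\<^sup>2 \<le> 2 * (a - sqrt (s y))\<^sup>2 + 2 * a\<^sup>2"
      proof -
        have "0 \<le> (2 * a - sqrt (s y))\<^sup>2" by simp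
        then show ?thesis by (simp add: power2_eq_square algebra_simps)
      qed
      ultimately have "s y \<le> 2 * (a - sqrt (s y))\<^sup>2 + 2 * a\<^sup>2" by simp
      from mult_left_mono[OF this f0[of y]] show ?thesis by (simp add: algebra_simps)
    qed
    then have "ennreal (f y * s y) \<le> ennreal (2 * (f y * (a - sqrt (s y))\<^sup>2) + (2 * a\<^sup>2) * f y)"
      by (rule ennreal_leI)
    also have "\<dots> = 2 * ennreal (f y * (a - sqrt (s y))\<^sup>2) + ennreal (2 * a\<^sup>2) * ennreal (f y)"
      using f0[of y] by (simp add: ennreal_plus ennreal_mult)
    finally show "ennreal (f y * s y) \<le> 2 * ennreal (f y * (a - sqrt (s y))\<^sup>2) + ennreal (2 * a\<^sup>2) * ennreal (f y)" .
  qed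
  also have "\<dots> = 2 * (\<integral>\<^sup>+ y. ennreal (f y * (a - sqrt (s y))\<^sup>2) \<partial>lborel) + ennreal (2 * a\<^sup>2)"
    by (simp add: nn_integral_add nn_integral_cmult f1)
  finally have le: "(\<integral>\<^sup>+ y. ennreal (f y * s y) \<partial>lborel) \<le> 2 * (\<integral>\<^sup>+ y. ennreal (f y * (a - sqrt (s y))\<^sup>2) \<partial>lborel) + ennreal (2 * a\<^sup>2)" .
  have "2 * (\<integral>\<^sup>+ y. ennreal (f y * (a - sqrt (s y))\<^sup>2) \<partial>lborel) + ennreal (2 * a\<^sup>2) = \<infinity>"
    using le unfolding True by (simp add: top_unique)
  hence "2 * (\<integral>\<^sup>+ y. ennreal (f y * (a - sqrt (s y))\<^sup>2) \<partial>lborel) = \<infinity>"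
    unfolding ennreal_add_eq_top by simp
  hence "(\<integral>\<^sup>+ y. ennreal (f y * (a - sqrt (s y))\<^sup>2) \<partial>lborel) = \<infinity>"
    by (auto simp: ennreal_mult_eq_top_iff)
  then show ?thesis by simp
next
  case False
  have intf: "integrable lborel f"
    using f1 f0 by (intro integrableI_nonneg) auto
  have intfs: "integrable lborel (\<lambda>y. f y * s y)"
    using False f0 s0 by (intro integrableI_nonneg) (auto simp: top.not_eq_extremum)
  have intfg: "integrable lborel (\<lambda>y. f y * sqrt (s y))"
  proof (rule Bochner_Integration.integrable_bound[OF Bochner_Integration.integrable_add[OF intf intfs]])
    show "AE y in lborel. norm (f y * sqrt (s y)) \<le> norm (f y + f y * s y)"
    proof (rule AE_I2)
      fix y
      have "sqrt (s y) \<le> 1 + s y"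
      proof -
        have "0 \<le> (sqrt (s y) - 1)\<^sup>2" by simp
        moreover have "(sqrt (s y))\<^sup>2 = s y" using s0 by simp
        ultimately show ?thesis using real_sqrt_ge_zero[OF s0[of y]]
          by (simp add: power2_eq_square algebra_simps)
      qed
      then show "norm (f y * sqrt (s y)) \<le> norm (f y + f y * s y)"
        using f0[of y] s0[of y] mult_left_mono[OF \<open>sqrt (s y) \<le> 1 + s y\<close> f0[of y]]
        by (simp add: distrib_left abs_mult)
    qed
  qed simp
  have intf1: "integral\<^sup>L lborel f = 1"
    using nn_integral_eq_integral[OF intf] f0 f1 by simp
  define m where "m = (\<integral> y. f y * sqrt (s y) \<partial>lborel)"
  define h where "h = (\<integral> y. f y * s y \<partial>lborel)"
  have expand: "integrable lborel (\<lambda>y. f y * (c - sqrt (s y))\<^sup>2) \<and>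
      (\<integral> y. f y * (c - sqrt (s y))\<^sup>2 \<partial>lborel) = c\<^sup>2 - 2 * c * m + h" for c
  proof -
    have eq: "(\<lambda>y. f y * (c - sqrt (s y))\<^sup>2) = (\<lambda>y. c\<^sup>2 * f y - 2 * c * (f y * sqrt (s y)) + f y * s y)"
      using s0 by (auto simp: power2_eq_square algebra_simps)
    show ?thesis unfolding eq m_def h_def using intf intfs intfg intf1
      by (simp add: integral_add integral_diff)
  qed
  have h0: "0 \<le> h" unfolding h_def using f0 s0 by (simp add: Bochner_Integration.integral_nonneg)
  have "0 \<le> m\<^sup>2 - 2 * m * m + h"
  proof -
    have "0 \<le> (\<integral> y. f y * (m - sqrt (s y))\<^sup>2 \<partial>lborel)"
      by (rule Bochner_Integration.integral_nonneg) (simp add: f0)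
    then show ?thesis using expand[of m] by simp
  qed
  hence mh: "m\<^sup>2 \<le> h" by (simp add: power2_eq_square)
  have "m \<le> sqrt h"
    using mh h0 real_le_rsqrt by (cases "m \<le> 0") auto
  hence "a * m \<le> a * sqrt h" using a0 by (simp add: mult_left_mono)
  hence "(a - sqrt h)\<^sup>2 \<le> a\<^sup>2 - 2 * a * m + h"
    using h0 by (simp add: power2_eq_square algebra_simps)
  also have "\<dots> = (\<integral> y. f y * (a - sqrt (s y))\<^sup>2 \<partial>lborel)" using expand by simp
  finally have "ennreal ((a - sqrt h)\<^sup>2) \<le> ennreal (\<integral> y. f y * (a - sqrt (s y))\<^sup>2 \<partial>lborel)"
    by (rule ennreal_leI)
  also have "\<dots> = (\<integral>\<^sup>+ y. ennreal (f y * (a - sqrt (s y))\<^sup>2) \<partial>lborel)"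
    using expand f0 by (intro nn_integral_eq_integral[symmetric]) auto
  finally show ?thesis unfolding h_def .
qed


lemma nn_affine:
  fixes f :: "real \<Rightarrow> ennreal" and c t :: real
  assumes [measurable]: "f \<in> borel_measurable borel" and c: "c \<noteq> 0"
  shows "(\<integral>\<^sup>+ y. f (t + c * y) * ennreal \<bar>c\<bar> \<partial>lborel) = (\<integral>\<^sup>+ y. f y \<partial>lborel)"
  by (subst nn_integral_multc) (simp_all add: nn_integral_real_affine[OF assms(1) c, of t] mult.commute)

lemma phi_bound:
  fixes \<phi> :: "real \<Rightarrow> real"
  assumes phi_mono: "mono_on {0..} \<phi>" and phi_concave: "concave_on {0..} \<phi>"
    and phi_zero: "\<phi> 0 = 0" and w: "w > 0" and t: "t \<ge> 0"
  shows "0 \<le> \<phi> (w * t)" "\<phi> (w * t) \<le> max 1 t * \<phi> w"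
proof -
  show "0 \<le> \<phi> (w * t)" using mono_onD[OF phi_mono, of 0 "w * t"] w t phi_zero by simp
  show "\<phi> (w * t) \<le> max 1 t * \<phi> w"
  proof (cases "t \<le> 1")
    case True
    then have "\<phi> (w * t) \<le> \<phi> w" using mono_onD[OF phi_mono, of "w * t" w] w t
      by (simp add: mult_left_le)
    then show ?thesis using True by simp
  next
    case False
    have "(1 - 1/t) * \<phi> 0 + (1/t) * \<phi> (w * t) \<le> \<phi> ((1 - 1/t) *\<^sub>R 0 + (1/t) *\<^sub>R (w * t))"
      using False w t by (intro concave_onD[OF phi_concave]) auto
    also have "(1 - 1/t) *\<^sub>R 0 + (1/t) *\<^sub>R (w * t) = w" using False by simp
    finally have "\<phi> (w * t) / t \<le> \<phi> w" using phi_zero by simp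
    then have "\<phi> (w * t) \<le> t * \<phi> w" using False by (simp add: divide_le_eq mult.commute)
    then show ?thesis using False by simp
  qed
qed

lemma shift_bound:
  fixes s :: "real \<Rightarrow> real"
  assumes sm[measurable]: "s \<in> borel_measurable borel" and s0: "\<And>x. 0 \<le> s x"
    and s1: "(\<integral>\<^sup>+ x. ennreal (s x) \<partial>lborel) = 1"
  shows "(\<integral>\<^sup>+ x. ennreal ((sqrt (s (x + z)) - sqrt (s x))\<^sup>2) \<partial>lborel)
           = ennreal ((L2_norm (\<lambda>x. sqrt (s (x + z)) - sqrt (s x)))\<^sup>2)"
    and "L2_norm (\<lambda>x. sqrt (s (x + z)) - sqrt (s x)) \<le> 2"
proof -
  let ?u = "\<lambda>x. (sqrt (s (x + z)) - sqrt (s x))\<^sup>2"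
  have "(\<integral>\<^sup>+ x. ennreal (?u x) \<partial>lborel) \<le> (\<integral>\<^sup>+ x. 2 * ennreal (s (z + 1 * x)) + 2 * ennreal (s x) \<partial>lborel)"
  proof (rule nn_integral_mono)
    fix x
    have "?u x \<le> 2 * s (z + 1 * x) + 2 * s x"
    proof -
      have "0 \<le> (sqrt (s (x + z)) + sqrt (s x))\<^sup>2" by simp
      moreover have "(sqrt (s (x + z)))\<^sup>2 = s (z + 1 * x)" using s0 by (simp add: add.commute)
      moreover have "(sqrt (s x))\<^sup>2 = s x" using s0 by simp
      ultimately show ?thesis by (simp add: power2_eq_square algebra_simps)
    qed
    then have "ennreal (?u x) \<le> ennreal (2 * s (z + 1 * x) + 2 * s x)" by (rule ennreal_leI)
    also have "\<dots> = 2 * ennreal (s (z + 1 * x)) + 2 * ennreal (s x)"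
      using s0 by (simp add: ennreal_plus ennreal_mult)
    finally show "ennreal (?u x) \<le> 2 * ennreal (s (z + 1 * x)) + 2 * ennreal (s x)" .
  qed
  also have "\<dots> = 2 * (\<integral>\<^sup>+ x. ennreal (s (z + 1 * x)) \<partial>lborel) + 2 * (\<integral>\<^sup>+ x. ennreal (s x) \<partial>lborel)"
    by (simp add: nn_integral_add nn_integral_cmult)
  also have "(\<integral>\<^sup>+ x. ennreal (s (z + 1 * x)) \<partial>lborel) = 1"
    using nn_affine[of "\<lambda>x. ennreal (s x)" 1 z] s1 by simp
  finally have le4: "(\<integral>\<^sup>+ x. ennreal (?u x) \<partial>lborel) \<le> 4" using s1 by simp
  have int: "integrable lborel ?u"
    using le4 by (intro integrableI_nonneg) (auto simp: le_less_trans[OF le4])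
  have eq: "(\<integral>\<^sup>+ x. ennreal (?u x) \<partial>lborel) = ennreal (integral\<^sup>L lborel ?u)"
    using int by (intro nn_integral_eq_integral) auto
  have I0: "0 \<le> integral\<^sup>L lborel ?u" by (simp add: Bochner_Integration.integral_nonneg)
  have L2: "(L2_norm (\<lambda>x. sqrt (s (x + z)) - sqrt (s x)))\<^sup>2 = integral\<^sup>L lborel ?u"
    unfolding L2_norm_def using I0 by simp
  show "(\<integral>\<^sup>+ x. ennreal ((sqrt (s (x + z)) - sqrt (s x))\<^sup>2) \<partial>lborel)
           = ennreal ((L2_norm (\<lambda>x. sqrt (s (x + z)) - sqrt (s x)))\<^sup>2)"
    using eq L2 by simp
  have "integral\<^sup>L lborel ?u \<le> 4" using le4 eq I0
    by (metis ennreal_le_iff ennreal_numeral zero_le_numeral)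
  then have "sqrt (integral\<^sup>L lborel ?u) \<le> sqrt 4" by (rule real_sqrt_le_mono)
  then show "L2_norm (\<lambda>x. sqrt (s (x + z)) - sqrt (s x)) \<le> 2"
    unfolding L2_norm_def by simp
qed

lemma L2_le_nn:
  fixes u :: "real \<Rightarrow> real"
  shows "ennreal ((L2_norm u)\<^sup>2) \<le> (\<integral>\<^sup>+ x. ennreal ((u x)\<^sup>2) \<partial>lborel)"
proof (cases "integrable lborel (\<lambda>x. (u x)\<^sup>2)")
  case True
  have I0: "0 \<le> (\<integral> x. (u x)\<^sup>2 \<partial>lborel)" by (simp add: Bochner_Integration.integral_nonneg)
  have "ennreal ((L2_norm u)\<^sup>2) = ennreal (\<integral> x. (u x)\<^sup>2 \<partial>lborel)"
    unfolding L2_norm_def using I0 by simp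
  also have "\<dots> = (\<integral>\<^sup>+ x. ennreal ((u x)\<^sup>2) \<partial>lborel)"
    using True by (intro nn_integral_eq_integral[symmetric]) auto
  finally show ?thesis by simp
next
  case False
  then show ?thesis unfolding L2_norm_def by (simp add: not_integrable_integral_eq)
qed


theorem lemma2:
  fixes s K \<phi> :: "real \<Rightarrow> real"
  assumes s_dens: "prob_density s"
    and K_dens: "prob_density K"
    and phi_mono: "mono_on {0..} \<phi>"
    and phi_concave: "concave_on {0..} \<phi>"
    and phi_zero: "\<phi> 0 = 0"
    and modulus: "\<And>\<eta>. \<eta> \<ge> 0 \<Longrightarrow> omega2 (\<lambda>x. sqrt (s x)) \<eta> \<le> \<phi> \<eta>"
    and w_pos: "w > 0"
  shows "ennreal ((L2_norm (\<lambda>x. sqrt (s x) - sqrt (convolution (scaled_kernel K w) s x)))\<^sup>2)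
    \<le> 2 * (\<integral>\<^sup>+ x. ennreal (max 1 (x\<^sup>2) * K x) \<partial>lborel) * ennreal ((\<phi> w)\<^sup>2)"
proof -
  have sm[measurable]: "s \<in> borel_measurable borel" and s0: "\<And>x. 0 \<le> s x"
    and s1: "(\<integral>\<^sup>+ x. ennreal (s x) \<partial>lborel) = 1"
    using s_dens unfolding prob_density_def by auto
  have Km[measurable]: "K \<in> borel_measurable borel" and K0: "\<And>x. 0 \<le> K x"
    and K1: "(\<integral>\<^sup>+ x. ennreal (K x) \<partial>lborel) = 1"
    using K_dens unfolding prob_density_def by auto
  define Kw where "Kw = scaled_kernel K w"
  have Kw_def': "Kw y = K (y / w) / w" for y unfolding Kw_def scaled_kernel_def by simp
  have Kw0: "0 \<le> Kw y" for y using K0 w_pos unfolding Kw_def' by simp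
  have Kwm[measurable]: "Kw \<in> borel_measurable borel"
    unfolding Kw_def scaled_kernel_def by measurable
  let ?g = "\<lambda>x. sqrt (s x)"
  have "mono (\<lambda>x. \<phi> (max 0 x))"
    by (rule monoI) (rule mono_onD[OF phi_mono], auto)
  then have phim'[measurable]: "(\<lambda>x. \<phi> (max 0 x)) \<in> borel_measurable borel"
    by (rule borel_measurable_mono)
  have "(\<lambda>y. \<phi> (max 0 \<bar>y\<bar>)) \<in> borel_measurable borel" by measurable
  then have phim[measurable]: "(\<lambda>y. \<phi> \<bar>y\<bar>) \<in> borel_measurable borel" by simp
  have "ennreal ((L2_norm (\<lambda>x. sqrt (s x) - sqrt (convolution Kw s x)))\<^sup>2)
      \<le> (\<integral>\<^sup>+ x. ennreal ((sqrt (s x) - sqrt (convolution Kw s x))\<^sup>2) \<partial>lborel)"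
    by (rule L2_le_nn)
  also have "\<dots> \<le> (\<integral>\<^sup>+ x. (\<integral>\<^sup>+ y. ennreal (Kw (x - y) * (sqrt (s x) - sqrt (s y))\<^sup>2) \<partial>lborel) \<partial>lborel)"
  proof (rule nn_integral_mono)
    fix x
    have f1: "(\<integral>\<^sup>+ y. ennreal (Kw (x - y)) \<partial>lborel) = 1"
    proof -
      have "(\<integral>\<^sup>+ y. ennreal (Kw (x - y)) \<partial>lborel)
          = (\<integral>\<^sup>+ y. ennreal (K (x / w + (- 1 / w) * y)) * ennreal \<bar>- 1 / w\<bar> \<partial>lborel)"
      proof (rule nn_integral_cong)
        fix y
        have "Kw (x - y) = K (x / w + (- 1 / w) * y) * \<bar>- 1 / w\<bar>"
          unfolding Kw_def' using w_pos by (simp add: diff_divide_distrib)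
        then show "ennreal (Kw (x - y)) = ennreal (K (x / w + (- 1 / w) * y)) * ennreal \<bar>- 1 / w\<bar>"
          using K0[of "x / w + (- 1 / w) * y"] w_pos by (simp add: ennreal_mult[symmetric])
      qed
      also have "\<dots> = 1" using nn_affine[of "\<lambda>y. ennreal (K y)" "-1/w" "x/w"] w_pos K1 by simp
      finally show ?thesis .
    qed
    show "ennreal ((sqrt (s x) - sqrt (convolution Kw s x))\<^sup>2)
        \<le> (\<integral>\<^sup>+ y. ennreal (Kw (x - y) * (sqrt (s x) - sqrt (s y))\<^sup>2) \<partial>lborel)"
      unfolding convolution_def
      by (rule ptwise) (use Kw0 s0 f1 in auto)
  qed
  also have "\<dots> = (\<integral>\<^sup>+ x. (\<integral>\<^sup>+ z. ennreal (Kw (- z) * (sqrt (s x) - sqrt (s (x + z)))\<^sup>2) \<partial>lborel) \<partial>lborel)"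
  proof (rule nn_integral_cong)
    fix x
    show "(\<integral>\<^sup>+ y. ennreal (Kw (x - y) * (sqrt (s x) - sqrt (s y))\<^sup>2) \<partial>lborel)
        = (\<integral>\<^sup>+ z. ennreal (Kw (- z) * (sqrt (s x) - sqrt (s (x + z)))\<^sup>2) \<partial>lborel)"
      using nn_affine[of "\<lambda>y. ennreal (Kw (x - y) * (sqrt (s x) - sqrt (s y))\<^sup>2)" 1 x]
      by simp
  qed
  also have "\<dots> = (\<integral>\<^sup>+ z. (\<integral>\<^sup>+ x. ennreal (Kw (- z) * (sqrt (s x) - sqrt (s (x + z)))\<^sup>2) \<partial>lborel) \<partial>lborel)"
    by (rule lborel_pair.Fubini'[symmetric]) measurable
  also have "\<dots> \<le> (\<integral>\<^sup>+ z. ennreal (Kw (- z)) * ennreal ((\<phi> \<bar>z\<bar>)\<^sup>2) \<partial>lborel)"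
  proof (rule nn_integral_mono)
    fix z
    have "(\<integral>\<^sup>+ x. ennreal (Kw (- z) * (sqrt (s x) - sqrt (s (x + z)))\<^sup>2) \<partial>lborel)
        = (\<integral>\<^sup>+ x. ennreal (Kw (- z)) * ennreal ((sqrt (s (x + z)) - sqrt (s x))\<^sup>2) \<partial>lborel)"
      using Kw0 by (intro nn_integral_cong) (simp add: ennreal_mult power2_commute)
    also have "\<dots> = ennreal (Kw (- z)) * (\<integral>\<^sup>+ x. ennreal ((sqrt (s (x + z)) - sqrt (s x))\<^sup>2) \<partial>lborel)"
      by (rule nn_integral_cmult) measurable
    also have "\<dots> = ennreal (Kw (- z)) * ennreal ((L2_norm (\<lambda>x. sqrt (s (x + z)) - sqrt (s x)))\<^sup>2)"
      using shift_bound(1)[OF sm s0 s1] by simp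
    also have "\<dots> \<le> ennreal (Kw (- z)) * ennreal ((\<phi> \<bar>z\<bar>)\<^sup>2)"
    proof (intro mult_left_mono ennreal_leI)
      have "L2_norm (\<lambda>x. sqrt (s (x + z)) - sqrt (s x)) \<le> omega2 ?g \<bar>z\<bar>"
        unfolding omega2_def
      proof (rule cSUP_upper)
        show "z \<in> {z'. \<bar>z'\<bar> \<le> \<bar>z\<bar>}" by simp
        show "bdd_above ((\<lambda>z. L2_norm (\<lambda>x. sqrt (s (x + z)) - sqrt (s x))) ` {z'. \<bar>z'\<bar> \<le> \<bar>z\<bar>})"
          using shift_bound(2)[OF sm s0 s1] by (intro bdd_aboveI2) blast
      qed
      also have "\<dots> \<le> \<phi> \<bar>z\<bar>" by (rule modulus) simp
      finally have le: "L2_norm (\<lambda>x. sqrt (s (x + z)) - sqrt (s x)) \<le> \<phi> \<bar>z\<bar>" .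
      have "0 \<le> L2_norm (\<lambda>x. sqrt (s (x + z)) - sqrt (s x))" unfolding L2_norm_def by simp
      then show "(L2_norm (\<lambda>x. sqrt (s (x + z)) - sqrt (s x)))\<^sup>2 \<le> (\<phi> \<bar>z\<bar>)\<^sup>2"
        by (rule power_mono[OF le])
    qed simp
    finally show "(\<integral>\<^sup>+ x. ennreal (Kw (- z) * (sqrt (s x) - sqrt (s (x + z)))\<^sup>2) \<partial>lborel)
        \<le> ennreal (Kw (- z)) * ennreal ((\<phi> \<bar>z\<bar>)\<^sup>2)" .
  qed
  also have "\<dots> = (\<integral>\<^sup>+ x. ennreal (K x * (\<phi> (w * \<bar>x\<bar>))\<^sup>2) \<partial>lborel)"
  proof -
    have "(\<integral>\<^sup>+ z. ennreal (Kw (- z)) * ennreal ((\<phi> \<bar>z\<bar>)\<^sup>2) \<partial>lborel)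
       = (\<integral>\<^sup>+ x. ennreal (Kw (- (0 + (- w) * x))) * ennreal ((\<phi> \<bar>0 + (- w) * x\<bar>)\<^sup>2) * ennreal \<bar>- w\<bar> \<partial>lborel)"
      by (rule nn_affine[symmetric]) (measurable, use w_pos in simp)
    also have "\<dots> = (\<integral>\<^sup>+ x. ennreal (K x * (\<phi> (w * \<bar>x\<bar>))\<^sup>2) \<partial>lborel)"
    proof (rule nn_integral_cong)
      fix x
      have "Kw (- (0 + (- w) * x)) * (\<phi> \<bar>0 + (- w) * x\<bar>)\<^sup>2 * \<bar>- w\<bar> = K x * (\<phi> (w * \<bar>x\<bar>))\<^sup>2"
        unfolding Kw_def' using w_pos by (simp add: abs_mult)
      then show "ennreal (Kw (- (0 + (- w) * x))) * ennreal ((\<phi> \<bar>0 + (- w) * x\<bar>)\<^sup>2) * ennreal \<bar>- w\<bar>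
          = ennreal (K x * (\<phi> (w * \<bar>x\<bar>))\<^sup>2)"
        using Kw0 by (simp add: ennreal_mult[symmetric])
    qed
    finally show ?thesis .
  qed
  also have "\<dots> \<le> (\<integral>\<^sup>+ x. ennreal (max 1 (x\<^sup>2) * K x) * ennreal ((\<phi> w)\<^sup>2) \<partial>lborel)"
  proof (rule nn_integral_mono)
    fix x
    have b0: "0 \<le> \<phi> (w * \<bar>x\<bar>)" and b1: "\<phi> (w * \<bar>x\<bar>) \<le> max 1 \<bar>x\<bar> * \<phi> w"
      using phi_bound[OF phi_mono phi_concave phi_zero w_pos, of "\<bar>x\<bar>"] by auto
    have "(\<phi> (w * \<bar>x\<bar>))\<^sup>2 \<le> (max 1 \<bar>x\<bar> * \<phi> w)\<^sup>2" by (rule power_mono[OF b1 b0])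
    also have "\<dots> = max 1 (x\<^sup>2) * (\<phi> w)\<^sup>2"
    proof -
      have "(max 1 \<bar>x\<bar>)\<^sup>2 = max 1 (x\<^sup>2)"
      proof (cases "\<bar>x\<bar> \<le> 1")
        case True
        then have "x\<^sup>2 \<le> 1" by (simp add: abs_square_le_1)
        then show ?thesis using True by simp
      next
        case False
        then have "1 \<le> x\<^sup>2" using abs_square_le_1[of x] by linarith
        then show ?thesis using False by (simp add: max_def)
      qed
      then show ?thesis by (simp add: power_mult_distrib)
    qed
    finally have "K x * (\<phi> (w * \<bar>x\<bar>))\<^sup>2 \<le> K x * (max 1 (x\<^sup>2) * (\<phi> w)\<^sup>2)"
      by (rule mult_left_mono[OF _ K0[of x]])
    then have "K x * (\<phi> (w * \<bar>x\<bar>))\<^sup>2 \<le> max 1 (x\<^sup>2) * K x * (\<phi> w)\<^sup>2"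
      by (simp add: algebra_simps)
    then show "ennreal (K x * (\<phi> (w * \<bar>x\<bar>))\<^sup>2) \<le> ennreal (max 1 (x\<^sup>2) * K x) * ennreal ((\<phi> w)\<^sup>2)"
      using K0[of x] by (simp add: ennreal_mult[symmetric] ennreal_leI)
  qed
  also have "\<dots> = (\<integral>\<^sup>+ x. ennreal (max 1 (x\<^sup>2) * K x) \<partial>lborel) * ennreal ((\<phi> w)\<^sup>2)"
    by (rule nn_integral_multc) measurable
  also have "\<dots> \<le> 2 * (\<integral>\<^sup>+ x. ennreal (max 1 (x\<^sup>2) * K x) \<partial>lborel) * ennreal ((\<phi> w)\<^sup>2)"
  proof -
    have "(\<integral>\<^sup>+ x. ennreal (max 1 (x\<^sup>2) * K x) \<partial>lborel) * ennreal ((\<phi> w)\<^sup>2)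
        = 1 * ((\<integral>\<^sup>+ x. ennreal (max 1 (x\<^sup>2) * K x) \<partial>lborel) * ennreal ((\<phi> w)\<^sup>2))" by simp
    also have "\<dots> \<le> 2 * ((\<integral>\<^sup>+ x. ennreal (max 1 (x\<^sup>2) * K x) \<partial>lborel) * ennreal ((\<phi> w)\<^sup>2))"
      by (rule mult_right_mono) simp_all
    finally show ?thesis by (simp add: mult.assoc)
  qed
  finally show ?thesis unfolding Kw_def .
qed

end
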